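(* Let $G=M_{27}=\langle a,b\mid a^{9}=b^3=e,\ b^{-1}ab=a^{4}\rangle$ and let $\mathcal{A}$ be the $S$-ring over $G$ with basic sets $Z_0=\{e\}$, $Z_1=\{a^3b,\ a^6b^2\}$, $Z_2=\{a,\ a^3,\ a^6,\ a^8,\ a^4b^2,\ a^7b,\ a^8b,\ a^8b^2\}$, $Z_3=G\setminus(Z_0\cup Z_1\cup Z_2)$. Then $\mathcal{A}$ is not schurian.
   Context: For $X\subseteq G$, $\underline{X}=\sum_{x\in X}x\in\mathbb{Z}G$. A subring $\mathcal{A}$ of $\mathbb{Z}G$ is an $S$-ring over $G$ with basic sets forming a partition $\mathcal{S}(\mathcal{A})$ of $G$ if $\{e\}\in\mathcal{S}(\mathcal{A})$, $X\in\mathcal{S}(\mathcal{A})\Rightarrow X^{-1}\in\mathcal{S}(\mathcal{A})$, and $\mathcal{A}=\mathrm{Span}_{\mathbb{Z}}\{\underline{X}: X\in\mathcal{S}(\mathcal{A})\}$ (the span of $\underline{Z_0},\dots,\underline{Z_3}$ is indeed closed under multiplication). Let $G_{right}=\{x\mapsto xg: g\in G\}$. An $S$-ring $\mathcal{A}$ over $G$ is schurian if there is a permutation group $\Gamma$ with $G_{right}\leq\Gamma\leq\mathrm{Sym}(G)$ such that the basic sets of $\mathcal{A}$ are exactly the orbits on $G$ of the stabilizer $\Gamma_e$ of $e$ in $\Gamma$. *)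

theory Defs
  imports "HOL-Algebra.Bij"
begin

text \<open>The element a^i b^j (0 <= i < 9, 0 <= j < 3) is encoded as the pair (i, j).
  From b^-1 a b = a^4 one gets b a b^-1 = a^7, hence b^j a^k = a^(k*7^j) b^j and
  (a^i b^j)(a^k b^l) = a^(i + k*7^j) b^(j+l).\<close>

definition M27 :: "(nat \<times> nat) set" where
  "M27 = {0..<9} \<times> {0..<3}"

fun M27_mult :: "nat \<times> nat \<Rightarrow> nat \<times> nat \<Rightarrow> nat \<times> nat" where
  "M27_mult (i, j) (k, l) = ((i + k * 7 ^ j) mod 9, (j + l) mod 3)"

definition M27_one :: "nat \<times> nat" where
  "M27_one = (0, 0)"

definition schurian :: "'a set \<Rightarrow> ('a \<Rightarrow> 'a \<Rightarrow> 'a) \<Rightarrow> 'a \<Rightarrow> 'a set set \<Rightarrow> bool" where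
  "schurian G mul e S \<longleftrightarrow>
     (\<exists>\<Gamma>. subgroup \<Gamma> (BijGroup G) \<and>
          (\<forall>g\<in>G. (\<lambda>x\<in>G. mul x g) \<in> \<Gamma>) \<and>
          {{\<gamma> x | \<gamma>. \<gamma> \<in> \<Gamma> \<and> \<gamma> e = e} | x. x \<in> G} = S)"

definition Z0 :: "(nat \<times> nat) set" where "Z0 = {(0,0)}"
definition Z1 :: "(nat \<times> nat) set" where "Z1 = {(3,1), (6,2)}"
definition Z2 :: "(nat \<times> nat) set" where
  "Z2 = {(1,0), (3,0), (6,0), (8,0), (4,2), (7,1), (8,1), (8,2)}"
definition Z3 :: "(nat \<times> nat) set" where "Z3 = M27 - (Z0 \<union> Z1 \<union> Z2)"

end

theory Submission imports Defs begin
definition inv27 :: "nat\<times>nat \<Rightarrow> nat\<times>nat" where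
  "inv27 p = (((9 - fst p) * 4 ^ snd p) mod 9, (3 - snd p) mod 3)"
definition cls :: "nat\<times>nat \<Rightarrow> nat" where
  "cls z = (if z \<in> Z0 then 0 else if z \<in> Z1 then 1 else if z \<in> Z2 then 2 else 3)"
definition col :: "nat\<times>nat \<Rightarrow> nat\<times>nat \<Rightarrow> nat" where
  "col x y = cls (M27_mult y (inv27 x))"
lemmas col_simps = col_def cls_def inv27_def Z0_def Z1_def Z2_def
lemma M27_eq: "M27 = {(0,0),(0,1),(0,2),(1,0),(1,1),(1,2),(2,0),(2,1),(2,2),(3,0),(3,1),(3,2),
  (4,0),(4,1),(4,2),(5,0),(5,1),(5,2),(6,0),(6,1),(6,2),(7,0),(7,1),(7,2),(8,0),(8,1),(8,2)}"
proof -
  have a: "{0..<9::nat} = {0,1,2,3,4,5,6,7,8}" by auto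
  have b: "{0..<3::nat} = {0,1,2}" by auto
  show ?thesis unfolding M27_def a b by auto
qed
lemma assoc_inv: "\<forall>x\<in>M27. \<forall>y\<in>M27. M27_mult (M27_mult y (inv27 x)) x = y"
  by (simp add: M27_eq inv27_def)

lemma mul_closed: "a \<in> M27 \<Longrightarrow> b \<in> M27 \<Longrightarrow> M27_mult a b \<in> M27"
  by (cases a; cases b) (simp add: M27_def)
lemma inv_closed: "a \<in> M27 \<Longrightarrow> inv27 a \<in> M27"
  by (cases a) (simp add: M27_def inv27_def)
lemma left_id: "\<forall>x\<in>M27. M27_mult (0,0) x = x"
  by (simp add: M27_eq)
lemma right_inv: "\<forall>x\<in>M27. M27_mult x (inv27 x) = (0,0)"
  by (simp add: M27_eq inv27_def)

lemma comb:
  fixes \<delta> :: "nat\<times>nat \<Rightarrow> nat\<times>nat"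
  assumes D: "\<forall>x\<in>M27. \<delta> x \<in> M27"
    and P: "\<forall>x\<in>M27. \<forall>y\<in>M27. col (\<delta> x) (\<delta> y) = col x y"
    and e0: "\<delta> (0,0) = (0,0)" and e1: "\<delta> (1,0) = (3,0)"
  shows False
proof -
  have m11: "\<delta> (1,1) \<in> M27" by (rule D[rule_format]) (simp add: M27_def)
  have m12: "\<delta> (1,2) \<in> M27" by (rule D[rule_format]) (simp add: M27_def)
  have m21: "\<delta> (2,1) \<in> M27" by (rule D[rule_format]) (simp add: M27_def)
  have m30: "\<delta> (3,0) \<in> M27" by (rule D[rule_format]) (simp add: M27_def)
  have m82: "\<delta> (8,2) \<in> M27" by (rule D[rule_format]) (simp add: M27_def)
  have c0_0_1_1: "col (0,0) (1,1) = 3" by (simp add: col_simps)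
  have c0_0_3_0: "col (0,0) (3,0) = 2" by (simp add: col_simps)
  have c0_0_8_2: "col (0,0) (8,2) = 2" by (simp add: col_simps)
  have c1_0_1_1: "col (1,0) (1,1) = 1" by (simp add: col_simps)
  have c1_0_1_2: "col (1,0) (1,2) = 1" by (simp add: col_simps)
  have c1_0_8_2: "col (1,0) (8,2) = 2" by (simp add: col_simps)
  have c1_1_0_0: "col (1,1) (0,0) = 3" by (simp add: col_simps)
  have c1_1_1_0: "col (1,1) (1,0) = 1" by (simp add: col_simps)
  have c1_1_1_2: "col (1,1) (1,2) = 1" by (simp add: col_simps)
  have c1_1_2_1: "col (1,1) (2,1) = 2" by (simp add: col_simps)
  have c1_1_3_0: "col (1,1) (3,0) = 2" by (simp add: col_simps)
  have c1_1_8_2: "col (1,1) (8,2) = 3" by (simp add: col_simps)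
  have c1_2_1_0: "col (1,2) (1,0) = 1" by (simp add: col_simps)
  have c1_2_1_1: "col (1,2) (1,1) = 1" by (simp add: col_simps)
  have c2_1_1_1: "col (2,1) (1,1) = 2" by (simp add: col_simps)
  have c2_1_3_0: "col (2,1) (3,0) = 2" by (simp add: col_simps)
  have c2_1_8_2: "col (2,1) (8,2) = 1" by (simp add: col_simps)
  have c3_0_0_0: "col (3,0) (0,0) = 2" by (simp add: col_simps)
  have c3_0_1_1: "col (3,0) (1,1) = 2" by (simp add: col_simps)
  have c3_0_2_1: "col (3,0) (2,1) = 2" by (simp add: col_simps)
  have c8_2_0_0: "col (8,2) (0,0) = 2" by (simp add: col_simps)
  have c8_2_1_0: "col (8,2) (1,0) = 2" by (simp add: col_simps)
  have c8_2_1_1: "col (8,2) (1,1) = 3" by (simp add: col_simps)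
  have c8_2_2_1: "col (8,2) (2,1) = 1" by (simp add: col_simps)
  have h1: "col (0,0) (\<delta> (8,2)) = 2" using e0 c0_0_8_2 P[rule_format, of "(0,0)" "(8,2)"] by (simp add: M27_def)
  have h2: "col (\<delta> (8,2)) (0,0) = 2" using e0 c8_2_0_0 P[rule_format, of "(8,2)" "(0,0)"] by (simp add: M27_def)
  have h3: "col (3,0) (\<delta> (8,2)) = 2" using e1 c1_0_8_2 P[rule_format, of "(1,0)" "(8,2)"] by (simp add: M27_def)
  have h4: "col (\<delta> (8,2)) (3,0) = 2" using e1 c8_2_1_0 P[rule_format, of "(8,2)" "(1,0)"] by (simp add: M27_def)
  have "\<forall>z\<in>M27. (col (0,0) z = 2 \<and> col z (0,0) = 2 \<and> col (3,0) z = 2 \<and> col z (3,0) = 2) \<longrightarrow> z = (6,0)" by (simp only: M27_eq ball_simps(5,7)) (simp add: col_simps)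
  then have h5: "\<delta> (8,2) = (6,0)" using m82 h1 h2 h3 h4 by blast
  have h6: "col (0,0) (\<delta> (1,1)) = 3" using e0 c0_0_1_1 P[rule_format, of "(0,0)" "(1,1)"] by (simp add: M27_def)
  have h7: "col (\<delta> (1,1)) (0,0) = 3" using e0 c1_1_0_0 P[rule_format, of "(1,1)" "(0,0)"] by (simp add: M27_def)
  have h8: "col (3,0) (\<delta> (1,1)) = 1" using e1 c1_0_1_1 P[rule_format, of "(1,0)" "(1,1)"] by (simp add: M27_def)
  have h9: "col (\<delta> (1,1)) (3,0) = 1" using e1 c1_1_1_0 P[rule_format, of "(1,1)" "(1,0)"] by (simp add: M27_def)
  have h10: "col (6,0) (\<delta> (1,1)) = 3" using h5 c8_2_1_1 P[rule_format, of "(8,2)" "(1,1)"] by (simp add: M27_def)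
  have h11: "col (\<delta> (1,1)) (6,0) = 3" using h5 c1_1_8_2 P[rule_format, of "(1,1)" "(8,2)"] by (simp add: M27_def)
  have "\<forall>z\<in>M27. (col (0,0) z = 3 \<and> col z (0,0) = 3 \<and> col (3,0) z = 1 \<and> col z (3,0) = 1 \<and> col (6,0) z = 3 \<and> col z (6,0) = 3) \<longrightarrow> z = (0,2) \<or> z = (6,1)" by (simp only: M27_eq ball_simps(5,7)) (simp add: col_simps)
  then have h12: "\<delta> (1,1) = (0,2) \<or> \<delta> (1,1) = (6,1)" using m11 h6 h7 h8 h9 h10 h11 by blast
  then show False
  proof (elim disjE)
    assume h13: "\<delta> (1,1) = (0,2)"
    have h14: "col (3,0) (\<delta> (1,2)) = 1" using e1 c1_0_1_2 P[rule_format, of "(1,0)" "(1,2)"] by (simp add: M27_def)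
    have h15: "col (\<delta> (1,2)) (3,0) = 1" using e1 c1_2_1_0 P[rule_format, of "(1,2)" "(1,0)"] by (simp add: M27_def)
    have h16: "col (0,2) (\<delta> (1,2)) = 1" using h13 c1_1_1_2 P[rule_format, of "(1,1)" "(1,2)"] by (simp add: M27_def)
    have h17: "col (\<delta> (1,2)) (0,2) = 1" using h13 c1_2_1_1 P[rule_format, of "(1,2)" "(1,1)"] by (simp add: M27_def)
    have "\<forall>z\<in>M27. (col (3,0) z = 1 \<and> col z (3,0) = 1 \<and> col (0,2) z = 1 \<and> col z (0,2) = 1) \<longrightarrow> z = (6,1)" by (simp only: M27_eq ball_simps(5,7)) (simp add: col_simps)
    then have h18: "\<delta> (1,2) = (6,1)" using m12 h14 h15 h16 h17 by blast
    have h19: "col (6,0) (\<delta> (2,1)) = 1" using h5 c8_2_2_1 P[rule_format, of "(8,2)" "(2,1)"] by (simp add: M27_def)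
    have h20: "col (\<delta> (2,1)) (6,0) = 1" using h5 c2_1_8_2 P[rule_format, of "(2,1)" "(8,2)"] by (simp add: M27_def)
    have h21: "col (0,2) (\<delta> (2,1)) = 2" using h13 c1_1_2_1 P[rule_format, of "(1,1)" "(2,1)"] by (simp add: M27_def)
    have h22: "col (\<delta> (2,1)) (0,2) = 2" using h13 c2_1_1_1 P[rule_format, of "(2,1)" "(1,1)"] by (simp add: M27_def)
    have "\<forall>z\<in>M27. (col (6,0) z = 1 \<and> col z (6,0) = 1 \<and> col (0,2) z = 2 \<and> col z (0,2) = 2) \<longrightarrow> z = (3,2)" by (simp only: M27_eq ball_simps(5,7)) (simp add: col_simps)
    then have h23: "\<delta> (2,1) = (3,2)" using m21 h19 h20 h21 h22 by blast
    have h24: "col (0,0) (\<delta> (3,0)) = 2" using e0 c0_0_3_0 P[rule_format, of "(0,0)" "(3,0)"] by (simp add: M27_def)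
    have h25: "col (\<delta> (3,0)) (0,0) = 2" using e0 c3_0_0_0 P[rule_format, of "(3,0)" "(0,0)"] by (simp add: M27_def)
    have h26: "col (0,2) (\<delta> (3,0)) = 2" using h13 c1_1_3_0 P[rule_format, of "(1,1)" "(3,0)"] by (simp add: M27_def)
    have h27: "col (\<delta> (3,0)) (0,2) = 2" using h13 c3_0_1_1 P[rule_format, of "(3,0)" "(1,1)"] by (simp add: M27_def)
    have h28: "col (3,2) (\<delta> (3,0)) = 2" using h23 c2_1_3_0 P[rule_format, of "(2,1)" "(3,0)"] by (simp add: M27_def)
    have h29: "col (\<delta> (3,0)) (3,2) = 2" using h23 c3_0_2_1 P[rule_format, of "(3,0)" "(2,1)"] by (simp add: M27_def)
    have "\<forall>z\<in>M27. (col (0,0) z = 2 \<and> col z (0,0) = 2 \<and> col (0,2) z = 2 \<and> col z (0,2) = 2 \<and> col (3,2) z = 2 \<and> col z (3,2) = 2) \<longrightarrow> False" by (simp only: M27_eq ball_simps(5,7)) (simp add: col_simps)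
    then show False using m30 h24 h25 h26 h27 h28 h29 by blast
  next
    assume h30: "\<delta> (1,1) = (6,1)"
    have h31: "col (3,0) (\<delta> (1,2)) = 1" using e1 c1_0_1_2 P[rule_format, of "(1,0)" "(1,2)"] by (simp add: M27_def)
    have h32: "col (\<delta> (1,2)) (3,0) = 1" using e1 c1_2_1_0 P[rule_format, of "(1,2)" "(1,0)"] by (simp add: M27_def)
    have h33: "col (6,1) (\<delta> (1,2)) = 1" using h30 c1_1_1_2 P[rule_format, of "(1,1)" "(1,2)"] by (simp add: M27_def)
    have h34: "col (\<delta> (1,2)) (6,1) = 1" using h30 c1_2_1_1 P[rule_format, of "(1,2)" "(1,1)"] by (simp add: M27_def)
    have "\<forall>z\<in>M27. (col (3,0) z = 1 \<and> col z (3,0) = 1 \<and> col (6,1) z = 1 \<and> col z (6,1) = 1) \<longrightarrow> z = (0,2)" by (simp only: M27_eq ball_simps(5,7)) (simp add: col_simps)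
    then have h35: "\<delta> (1,2) = (0,2)" using m12 h31 h32 h33 h34 by blast
    have h36: "col (6,0) (\<delta> (2,1)) = 1" using h5 c8_2_2_1 P[rule_format, of "(8,2)" "(2,1)"] by (simp add: M27_def)
    have h37: "col (\<delta> (2,1)) (6,0) = 1" using h5 c2_1_8_2 P[rule_format, of "(2,1)" "(8,2)"] by (simp add: M27_def)
    have h38: "col (6,1) (\<delta> (2,1)) = 2" using h30 c1_1_2_1 P[rule_format, of "(1,1)" "(2,1)"] by (simp add: M27_def)
    have h39: "col (\<delta> (2,1)) (6,1) = 2" using h30 c2_1_1_1 P[rule_format, of "(2,1)" "(1,1)"] by (simp add: M27_def)
    have "\<forall>z\<in>M27. (col (6,0) z = 1 \<and> col z (6,0) = 1 \<and> col (6,1) z = 2 \<and> col z (6,1) = 2) \<longrightarrow> z = (0,1)" by (simp only: M27_eq ball_simps(5,7)) (simp add: col_simps)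
    then have h40: "\<delta> (2,1) = (0,1)" using m21 h36 h37 h38 h39 by blast
    have h41: "col (0,0) (\<delta> (3,0)) = 2" using e0 c0_0_3_0 P[rule_format, of "(0,0)" "(3,0)"] by (simp add: M27_def)
    have h42: "col (\<delta> (3,0)) (0,0) = 2" using e0 c3_0_0_0 P[rule_format, of "(3,0)" "(0,0)"] by (simp add: M27_def)
    have h43: "col (6,1) (\<delta> (3,0)) = 2" using h30 c1_1_3_0 P[rule_format, of "(1,1)" "(3,0)"] by (simp add: M27_def)
    have h44: "col (\<delta> (3,0)) (6,1) = 2" using h30 c3_0_1_1 P[rule_format, of "(3,0)" "(1,1)"] by (simp add: M27_def)
    have h45: "col (0,1) (\<delta> (3,0)) = 2" using h40 c2_1_3_0 P[rule_format, of "(2,1)" "(3,0)"] by (simp add: M27_def)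
    have h46: "col (\<delta> (3,0)) (0,1) = 2" using h40 c3_0_2_1 P[rule_format, of "(3,0)" "(2,1)"] by (simp add: M27_def)
    have "\<forall>z\<in>M27. (col (0,0) z = 2 \<and> col z (0,0) = 2 \<and> col (6,1) z = 2 \<and> col z (6,1) = 2 \<and> col (0,1) z = 2 \<and> col z (0,1) = 2) \<longrightarrow> False" by (simp only: M27_eq ball_simps(5,7)) (simp add: col_simps)
    then show False using m30 h41 h42 h43 h44 h45 h46 by blast
  qed
qed

lemma cls0: "x \<in> Z0 \<Longrightarrow> cls x = 0" by (simp add: cls_def)
lemma cls1: "x \<in> Z1 \<Longrightarrow> cls x = 1" unfolding cls_def Z0_def Z1_def by auto
lemma cls2: "x \<in> Z2 \<Longrightarrow> cls x = 2" unfolding cls_def Z0_def Z1_def Z2_def by auto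
lemma cls3: "x \<in> Z3 \<Longrightarrow> cls x = 3" unfolding cls_def Z3_def by auto
lemma clsZ: "A \<in> {Z0,Z1,Z2,Z3} \<Longrightarrow> a \<in> A \<Longrightarrow> b \<in> A \<Longrightarrow> cls a = cls b"
  by (elim insertE emptyE) (simp_all add: cls0 cls1 cls2 cls3)

theorem proposition3p1:
  shows "\<not> schurian M27 M27_mult M27_one {Z0, Z1, Z2, Z3}"
  unfolding schurian_def
proof
  assume "\<exists>\<Gamma>. subgroup \<Gamma> (BijGroup M27) \<and>
          (\<forall>g\<in>M27. (\<lambda>x\<in>M27. M27_mult x g) \<in> \<Gamma>) \<and>
          {{\<gamma> x | \<gamma>. \<gamma> \<in> \<Gamma> \<and> \<gamma> M27_one = M27_one} | x. x \<in> M27} = {Z0, Z1, Z2, Z3}"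
  then obtain \<Gamma> where sg: "subgroup \<Gamma> (BijGroup M27)"
    and R: "\<forall>g\<in>M27. (\<lambda>x\<in>M27. M27_mult x g) \<in> \<Gamma>"
    and O: "{{\<gamma> x | \<gamma>. \<gamma> \<in> \<Gamma> \<and> \<gamma> M27_one = M27_one} | x. x \<in> M27} = {Z0, Z1, Z2, Z3}"
    by blast
  define Orb where "Orb x = {\<gamma> x | \<gamma>. \<gamma> \<in> \<Gamma> \<and> \<gamma> M27_one = M27_one}" for x
  have O': "{Orb x | x. x \<in> M27} = {Z0, Z1, Z2, Z3}"
    unfolding Orb_def by (rule O)
  have OrbS: "Orb x \<in> {Z0,Z1,Z2,Z3}" if "x \<in> M27" for x
  proof -
    have "Orb x \<in> {Orb x | x. x \<in> M27}" using that by blast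
    then show ?thesis by (simp only: O')
  qed
  have one: "M27_one \<in> M27" by (simp add: M27_one_def M27_def)
  have idG: "(\<lambda>x\<in>M27. x) \<in> \<Gamma>"
    using subgroup.one_closed[OF sg] by (simp add: BijGroup_def)
  have self: "x \<in> Orb x" if "x \<in> M27" for x
    unfolding Orb_def by (rule CollectI, rule exI[of _ "\<lambda>x\<in>M27. x"]) (simp add: idG that one)
  have sub: "\<Gamma> \<subseteq> Bij M27"
    using subgroup.subset[OF sg] by (simp add: BijGroup_def)
  have comp: "compose M27 f g \<in> \<Gamma>" if "f \<in> \<Gamma>" "g \<in> \<Gamma>" for f g
  proof -
    have "f \<otimes>\<^bsub>BijGroup M27\<^esub> g \<in> \<Gamma>" using subgroup.m_closed[OF sg that] .
    moreover have "f \<otimes>\<^bsub>BijGroup M27\<^esub> g = compose M27 f g"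
      using that sub by (auto simp: BijGroup_def)
    ultimately show ?thesis by simp
  qed
  have maps: "\<gamma> x \<in> M27" if "\<gamma> \<in> \<Gamma>" "x \<in> M27" for \<gamma> x
    using Bij_imp_funcset[of \<gamma> M27] that sub by auto
  have pres: "col (\<gamma> x) (\<gamma> y) = col x y" if g: "\<gamma> \<in> \<Gamma>" and x: "x \<in> M27" and y: "y \<in> M27" for \<gamma> x y
  proof -
    define x' where "x' = \<gamma> x"
    have x'M: "x' \<in> M27" using maps g x x'_def by simp
    define \<psi> where "\<psi> = compose M27 (\<lambda>z\<in>M27. M27_mult z (inv27 x')) (compose M27 \<gamma> (\<lambda>z\<in>M27. M27_mult z x))"
    have psiG: "\<psi> \<in> \<Gamma>" unfolding \<psi>_def
      using comp R inv_closed[OF x'M] x g by simp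
    define w where "w = M27_mult y (inv27 x)"
    have wM: "w \<in> M27" using w_def mul_closed inv_closed x y by simp
    have "\<psi> M27_one = M27_one"
      using one x x'M left_id right_inv maps[OF g] mul_closed
      by (simp add: \<psi>_def compose_def M27_one_def x'_def)
    moreover have "\<psi> w = M27_mult (\<gamma> y) (inv27 x')"
      using wM x x'M assoc_inv maps[OF g] mul_closed y
      by (simp add: \<psi>_def compose_def w_def)
    ultimately have "M27_mult (\<gamma> y) (inv27 x') \<in> Orb w"
      unfolding Orb_def by (intro CollectI exI[of _ \<psi>]) (simp add: psiG)
    then have "cls (M27_mult (\<gamma> y) (inv27 x')) = cls w"
      using clsZ[OF OrbS[OF wM] _ self[OF wM]] by blast
    then show ?thesis by (simp add: col_def w_def x'_def)
  qed
  have p10: "(1,0) \<in> M27" by (simp add: M27_def)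
  have "Orb (1,0) = Z2"
  proof -
    have "(1::nat,0::nat) \<in> Orb (1,0)" using self[OF p10] .
    moreover have "(1::nat,0::nat) \<notin> Z0" "(1::nat,0::nat) \<notin> Z1" "(1::nat,0::nat) \<notin> Z3"
      by (auto simp: Z0_def Z1_def Z2_def Z3_def)
    ultimately show ?thesis using OrbS[OF p10] by auto
  qed
  then have "(3,0) \<in> Orb (1,0)" by (simp add: Z2_def)
  then obtain \<delta> where dG: "\<delta> \<in> \<Gamma>" and de: "\<delta> M27_one = M27_one" and d1: "\<delta> (1,0) = (3,0)"
    unfolding Orb_def by auto
  show False
  proof (rule comb[of \<delta>])
    show "\<forall>x\<in>M27. \<delta> x \<in> M27" using maps dG by blast
    show "\<forall>x\<in>M27. \<forall>y\<in>M27. col (\<delta> x) (\<delta> y) = col x y" using pres dG by blast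
    show "\<delta> (0,0) = (0,0)" using de by (simp add: M27_one_def)
    show "\<delta> (1,0) = (3,0)" by (rule d1)
  qed
qed

end
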